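(* Let $d\in\Lambda$ be a root ($d^2=-2$) and $F\subset d^\perp$ a primitive totally isotropic sublattice of rank $2$, where $d^\perp$ is the orthogonal complement of $d$ in $\Lambda$. Then every element of $\mathrm{SL}(F)$ lifts to an element of $O^+(d^\perp)$.
   Context: $\Lambda=\mathbb U(2)\oplus\mathbb U\oplus\mathbb E_8(2)$ ($\mathbb U$ hyperbolic plane, $\mathbb E_8$ negative-definite, $(2)$ scaling); $d^\perp$ has signature $(2,9)$. For a lattice $L$ of signature $(2,n)$, $O^+(L)$ is the subgroup of $O(L)$ preserving each of the two components of $\{[\omega]\in\mathbf P(L\otimes\mathbb C):\omega^2=0,\langle\omega,\bar\omega\rangle>0\}$. "Lifts" means: there is $g\in O^+(d^\perp)$ with $g(F)=F$ and $g|_F$ equal to the given element. *)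

theory Defs
  imports "HOL-Analysis.Analysis" "HOL-Library.Numeral_Type"
begin

text \<open>The lattice Lambda = U(2) + U + E8(2) is modelled as int^12 with the Gram
matrix below. Coordinates 0,1: U(2); 2,3: U; 4..11: E8(2) (negative definite E8
scaled by 2).\<close>

definition idx :: "12 \<Rightarrow> nat" where
  "idx i = nat (Rep_bit0 i)"

text \<open>Negative definite E8 Gram matrix (nodes 0..7, Bourbaki labelling shifted by one:
edges 1-3, 3-4, 4-5, 5-6, 6-7, 7-8, 2-4).\<close>
definition e8_edge :: "nat \<Rightarrow> nat \<Rightarrow> bool" where
  "e8_edge i j \<longleftrightarrow> {i, j} \<in> {{0,2},{2,3},{3,4},{4,5},{5,6},{6,7},{1,3}}"

definition e8 :: "nat \<Rightarrow> nat \<Rightarrow> int" where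
  "e8 i j = (if i = j then -2 else if e8_edge i j then 1 else 0)"

definition gram :: "nat \<Rightarrow> nat \<Rightarrow> int" where
  "gram i j =
     (if i < 2 \<and> j < 2 then (if i \<noteq> j then 2 else 0)
      else if 2 \<le> i \<and> i < 4 \<and> 2 \<le> j \<and> j < 4 then (if i \<noteq> j then 1 else 0)
      else if 4 \<le> i \<and> i < 12 \<and> 4 \<le> j \<and> j < 12 then 2 * e8 (i - 4) (j - 4)
      else 0)"

definition bf :: "int^12 \<Rightarrow> int^12 \<Rightarrow> int" where
  "bf x y = (\<Sum>i\<in>UNIV. \<Sum>j\<in>UNIV. x$i * gram (idx i) (idx j) * y$j)"

definition bfC :: "complex^12 \<Rightarrow> complex^12 \<Rightarrow> complex" where
  "bfC z w = (\<Sum>i\<in>UNIV. \<Sum>j\<in>UNIV. z$i * of_int (gram (idx i) (idx j)) * w$j)"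

definition cvec :: "int^12 \<Rightarrow> complex^12" where
  "cvec x = (\<chi> i. of_int (x$i))"

definition cconj :: "complex^12 \<Rightarrow> complex^12" where
  "cconj z = (\<chi> i. cnj (z$i))"

definition dperp :: "int^12 \<Rightarrow> (int^12) set" where
  "dperp d = {x. bf x d = 0}"

text \<open>L tensor C for a sublattice L, as the complex span inside C^12.\<close>
definition complexification :: "(int^12) set \<Rightarrow> (complex^12) set" where
  "complexification L = vec.span (cvec ` L)"

text \<open>The cone over the set {[w] in P(L x C) : w^2 = 0, <w, conj w> > 0}.\<close>
definition period_cone :: "(int^12) set \<Rightarrow> (complex^12) set" where
  "period_cone L = {w \<in> complexification L. w \<noteq> 0 \<and> bfC w w = 0 \<and> Re (bfC w (cconj w)) > 0}"

definition orth :: "(int^12) set \<Rightarrow> (int^12 \<Rightarrow> int^12) set" where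
  "orth L = {g. bij_betw g L L \<and> (\<forall>x\<in>L. \<forall>y\<in>L. g (x + y) = g x + g y)
                \<and> (\<forall>x\<in>L. \<forall>y\<in>L. bf (g x) (g y) = bf x y)}"

definition orth_plus :: "(int^12) set \<Rightarrow> (int^12 \<Rightarrow> int^12) set" where
  "orth_plus L = {g \<in> orth L. \<exists>gC :: complex^12 \<Rightarrow> complex^12.
      (\<forall>x\<in>L. gC (cvec x) = cvec (g x))
    \<and> (\<forall>z\<in>complexification L. \<forall>w\<in>complexification L. gC (z + w) = gC z + gC w)
    \<and> (\<forall>z\<in>complexification L. \<forall>c. gC (c *s z) = c *s gC z)
    \<and> (\<forall>w\<in>period_cone L. gC w \<in> connected_component_set (period_cone L) w)}"

definition lattice_basis :: "(int^12) set \<Rightarrow> int^12 \<Rightarrow> int^12 \<Rightarrow> bool" where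
  "lattice_basis F f1 f2 \<longleftrightarrow>
     F = {a *s f1 + c *s f2 | a c. True} \<and>
     (\<forall>a c. a *s f1 + c *s f2 = 0 \<longrightarrow> a = 0 \<and> c = 0)"

definition rank2_sublattice :: "(int^12) set \<Rightarrow> bool" where
  "rank2_sublattice F \<longleftrightarrow> (\<exists>f1 f2. lattice_basis F f1 f2)"

definition primitive_in :: "(int^12) set \<Rightarrow> (int^12) set \<Rightarrow> bool" where
  "primitive_in L F \<longleftrightarrow> F \<subseteq> L \<and> (\<forall>x\<in>L. \<forall>n::int. n \<noteq> 0 \<longrightarrow> n *s x \<in> F \<longrightarrow> x \<in> F)"

definition totally_isotropic :: "(int^12) set \<Rightarrow> bool" where
  "totally_isotropic F \<longleftrightarrow> (\<forall>x\<in>F. \<forall>y\<in>F. bf x y = 0)"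

text \<open>SL(F) for a rank 2 lattice F: Z-linear automorphisms of F with determinant 1
(determinant computed in a Z-basis; it is basis independent).\<close>
definition SL_lat :: "(int^12) set \<Rightarrow> (int^12 \<Rightarrow> int^12) set" where
  "SL_lat F = {\<phi>. bij_betw \<phi> F F \<and> (\<forall>x\<in>F. \<forall>y\<in>F. \<phi> (x + y) = \<phi> x + \<phi> y) \<and>
     (\<exists>f1 f2 a b c e. lattice_basis F f1 f2 \<and>
        \<phi> f1 = a *s f1 + c *s f2 \<and> \<phi> f2 = b *s f1 + e *s f2 \<and> a * e - b * c = 1)}"

end

theory Submission
  imports Defs
begin

lemma sum12: "(\<Sum>i\<in>(UNIV::12 set). f i) = (\<Sum>n<12. f (Abs_bit0 (int n)))"
proof -
  have u: "(UNIV::12 set) = (\<lambda>n. Abs_bit0 (int n)) ` {..<12}"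
  proof -
    have "(UNIV::12 set) = Abs_bit0 ` {0..<12}" using bit0.UNIV_eq[where 'a=6] by simp
    also have "{0..<12::int} = int ` {..<12}"
    proof -
      have "x \<in> int ` {..<12}" if "0 \<le> x" "x<12" for x using that by (intro image_eqI[of _ _ "nat x"]) auto
      then show ?thesis by auto
    qed
    finally show ?thesis by (simp add: image_image)
  qed
  have i: "inj_on (\<lambda>n. Abs_bit0 (int n) :: 12) {..<12}"
    by (rule inj_onI) (simp add: Abs_bit0_inject)
  show ?thesis by (simp add: u sum.reindex[OF i])
qed

lemma lt12: "{..<12::nat} = {0,1,2,3,4,5,6,7,8,9,10,11}"
  by (auto; presburger)

lemma sum_lt12: "(\<Sum>n<12::nat. f n) = f 0 + f 1 + f 2 + f 3 + f 4 + f 5 + f 6 + f 7 + f 8 + f 9 + f 10 + f 11"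
  by (simp add: lt12 algebra_simps)

lemma idx_Abs: "n < 12 \<Longrightarrow> idx (Abs_bit0 (int n) :: 12) = n"
  by (simp add: idx_def bit0.Abs_inverse)

definition C :: "int^12 \<Rightarrow> nat \<Rightarrow> int" where "C x n = x $ Abs_bit0 (int n)"

lemma bf_explicit: "bf x y =
  2*(C x 0 * C y 1 + C x 1 * C y 0) + C x 2 * C y 3 + C x 3 * C y 2
  - 4*(C x 4 * C y 4 + C x 5 * C y 5 + C x 6 * C y 6 + C x 7 * C y 7 + C x 8 * C y 8 + C x 9 * C y 9 + C x 10 * C y 10 + C x 11 * C y 11)
  + 2*(C x 4 * C y 6 + C x 6 * C y 4 + C x 6 * C y 7 + C x 7 * C y 6 + C x 7 * C y 8 + C x 8 * C y 7
     + C x 8 * C y 9 + C x 9 * C y 8 + C x 9 * C y 10 + C x 10 * C y 9 + C x 10 * C y 11 + C x 11 * C y 10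
     + C x 5 * C y 7 + C x 7 * C y 5)" (is "_ = ?R")
proof -
  have "bf x y = (\<Sum>n<12. \<Sum>m<12. C x n * gram n m * C y m)"
    unfolding bf_def sum12 by (simp add: idx_Abs C_def)
  also have "\<dots> = ?R"
    unfolding sum_lt12 by (simp add: gram_def e8_def e8_edge_def doubleton_eq_iff algebra_simps)
  finally show ?thesis .
qed


lemma all12: "(\<forall>i::12. P i) \<longleftrightarrow> (\<forall>k<12. P (Abs_bit0 (int k)))"
proof -
  have "\<exists>k<12. i = Abs_bit0 (int k)" for i :: 12
  proof -
    have "Rep_bit0 i \<in> {0..<12}" using Rep_bit0[of i] by simp
    then show ?thesis
      by (intro exI[of _ "nat (Rep_bit0 i)"]) (auto simp: Rep_bit0_inverse)
  qed
  then show ?thesis by metis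
qed

lemma vec12_eq: "(x::int^12) = y \<longleftrightarrow> (\<forall>k<12. C x k = C y k)"
  by (simp add: vec_eq_iff all12 C_def)

lemma C_add[simp]: "C (x + y) k = C x k + C y k" by (simp add: C_def)
lemma C_diff[simp]: "C (x - y) k = C x k - C y k" by (simp add: C_def)
lemma C_smult[simp]: "C (c *s x) k = c * C x k" by (simp add: C_def)
lemma C_zero[simp]: "C 0 k = 0" by (simp add: C_def)

lemma gram_sym: "gram i j = gram j i"
  unfolding gram_def e8_def e8_edge_def by (auto simp: insert_commute)

lemma bf_sym: "bf x y = bf y x"
  unfolding bf_def
  by (subst sum.swap) (simp add: gram_sym algebra_simps)

lemma bf_add_left: "bf (x + y) z = bf x z + bf y z"
  unfolding bf_def by (simp add: algebra_simps sum.distrib)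
lemma bf_add_right: "bf z (x + y) = bf z x + bf z y"
  unfolding bf_def by (simp add: algebra_simps sum.distrib)
lemma bf_smult_left: "bf (c *s x) z = c * bf x z"
  unfolding bf_def by (simp add: sum_distrib_left algebra_simps)
lemma bf_smult_right: "bf z (c *s x) = c * bf z x"
  unfolding bf_def by (simp add: sum_distrib_left algebra_simps)
lemma bf_diff_left: "bf (x - y) z = bf x z - bf y z"
  using bf_add_left[of "x - y" y z] by simp
lemma bf_diff_right: "bf z (x - y) = bf z x - bf z y"
  using bf_add_right[of z "x - y" y] by simp
lemma bf_zero_left: "bf 0 z = 0" unfolding bf_def by simp
lemma bf_zero_right: "bf z 0 = 0" unfolding bf_def by simp

lemmas bf_lin = bf_add_left bf_add_right bf_smult_left bf_smult_right bf_diff_left bf_diff_right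
  bf_zero_left bf_zero_right

definition K2 :: "int^12 \<Rightarrow> int^12 \<Rightarrow> int" where
  "K2 x y = C x 0 * C y 1 + C x 1 * C y 0
  - 2*(C x 4 * C y 4 + C x 5 * C y 5 + C x 6 * C y 6 + C x 7 * C y 7 + C x 8 * C y 8 + C x 9 * C y 9 + C x 10 * C y 10 + C x 11 * C y 11)
  + (C x 4 * C y 6 + C x 6 * C y 4 + C x 6 * C y 7 + C x 7 * C y 6 + C x 7 * C y 8 + C x 8 * C y 7
     + C x 8 * C y 9 + C x 9 * C y 8 + C x 9 * C y 10 + C x 10 * C y 9 + C x 10 * C y 11 + C x 11 * C y 10
     + C x 5 * C y 7 + C x 7 * C y 5)"

lemma bf_gen: "bf x y = 2 * K2 x y + C x 2 * C y 3 + C x 3 * C y 2"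
  unfolding bf_explicit K2_def by (simp add: algebra_simps)

lemma K2_self: "even (K2 x x)"
  unfolding K2_def by simp

lemma root_odd:
  assumes "bf d d = -2" shows "odd (C d 2)" "odd (C d 3)"
proof -
  have e: "2 * K2 d d + 2 * (C d 2 * C d 3) = -2" using assms bf_gen[of d d] by (simp add: algebra_simps)
  obtain k where k: "K2 d d = 2 * k" using K2_self by blast
  have "C d 2 * C d 3 = -1 - 2 * k" using e k by simp
  then have "odd (C d 2 * C d 3)" by presburger
  then show "odd (C d 2)" "odd (C d 3)" by auto
qed

lemma dperp_par:
  assumes "bf d d = -2" "bf x d = 0" shows "even (C x 2) \<longleftrightarrow> even (C x 3)"
proof -
  have "even (C x 2 * C d 3 + C x 3 * C d 2)"
  proof -
    have "C x 2 * C d 3 + C x 3 * C d 2 = 2 * (- K2 x d)" using assms(2) bf_gen[of x d] by simp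
    then show ?thesis by (metis dvd_triv_left)
  qed
  then show ?thesis using root_odd[OF assms(1)] by auto
qed

lemma dperp_even:
  assumes "bf d d = -2" "bf x d = 0" "bf y d = 0" shows "even (bf x y)"
proof -
  have "even (C x 2 * C y 3 + C x 3 * C y 2)"
    using dperp_par[OF assms(1,2)] dperp_par[OF assms(1,3)] by auto
  then show ?thesis by (simp add: bf_gen)
qed

lemma dperp_norm:
  assumes "bf d d = -2" "bf x d = 0" shows "4 dvd (bf x x - 2 * C x 2)"
proof -
  obtain k where k: "K2 x x = 2 * k" using K2_self by blast
  have "even (C x 2 * (C x 3 - 1))" using dperp_par[OF assms] by auto
  then obtain m where m: "C x 2 * (C x 3 - 1) = 2 * m" by blast
  have "bf x x - 2 * C x 2 = 4 * k + 2 * (C x 2 * (C x 3 - 1))"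
    using bf_gen[of x x] k by (simp add: algebra_simps)
  also have "\<dots> = 4 * (k + m)" using m by simp
  finally show ?thesis by simp
qed

definition E :: "nat \<Rightarrow> int^12" where "E k = (\<chi> i. if i = Abs_bit0 (int k) then 1 else 0)"

lemma C_E: "n < 12 \<Longrightarrow> k < 12 \<Longrightarrow> C (E k) n = (if n = k then 1 else 0)"
  by (simp add: C_def E_def Abs_bit0_inject)

lemma dvd2: "2 * (n::int) dvd 2 * m \<Longrightarrow> n dvd m" by simp

lemma unimod:
  assumes d: "bf d d = -2" and v: "bf v d = 0"
    and h: "\<forall>x. bf x d = 0 \<longrightarrow> 2 * n dvd bf v x"
  shows "\<forall>k<12. n dvd C v k"
proof -
  have all: "n dvd bf v y" for y
  proof -
    let ?x = "2 *s y + bf y d *s d"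
    have "bf ?x d = 0" using d by (simp add: bf_lin)
    then have "2 * n dvd bf v ?x" using h by blast
    moreover have "bf v ?x = 2 * bf v y" using v by (simp add: bf_lin bf_sym[of d v])
    ultimately show ?thesis by simp
  qed
  have ev: "2 * n dvd bf v y" if "even (bf y d)" for y
  proof -
    let ?x = "y + (bf y d div 2) *s d"
    have "bf ?x d = 0" using d that by (simp add: bf_lin)
    then have "2 * n dvd bf v ?x" using h by blast
    moreover have "bf v ?x = bf v y" using v by (simp add: bf_lin bf_sym[of d v])
    ultimately show ?thesis by simp
  qed
  have evE: "n dvd m" if "bf v (E k) = 2 * m" "even (bf (E k) d)" for k m
    using ev[OF that(2)] that(1) by simp
  note ex = bf_explicit C_E
  have c0: "n dvd C v 0" by (rule evE[of 1]) (simp_all add: ex)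
  have c1: "n dvd C v 1" by (rule evE[of 0]) (simp_all add: ex)
  have c2: "n dvd C v 2" using all[of "E 3"] by (simp add: ex)
  have c3: "n dvd C v 3" using all[of "E 2"] by (simp add: ex)
  have r4: "n dvd (-2 * C v 4 + C v 6)" by (rule evE[of 4]) (simp_all add: ex)
  have r5: "n dvd (-2 * C v 5 + C v 7)" by (rule evE[of 5]) (simp_all add: ex)
  have r6: "n dvd (-2 * C v 6 + C v 4 + C v 7)" by (rule evE[of 6]) (simp_all add: ex)
  have r7: "n dvd (-2 * C v 7 + C v 6 + C v 8 + C v 5)" by (rule evE[of 7]) (simp_all add: ex)
  have r8: "n dvd (-2 * C v 8 + C v 7 + C v 9)" by (rule evE[of 8]) (simp_all add: ex)
  have r9: "n dvd (-2 * C v 9 + C v 8 + C v 10)" by (rule evE[of 9]) (simp_all add: ex)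
  have r10: "n dvd (-2 * C v 10 + C v 9 + C v 11)" by (rule evE[of 10]) (simp_all add: ex)
  have r11: "n dvd (-2 * C v 11 + C v 10)" by (rule evE[of 11]) (simp_all add: ex)
  have "C v 4 = (-4) * (-2 * C v 4 + C v 6) + (-5) * (-2 * C v 5 + C v 7) + (-7) * (-2 * C v 6 + C v 4 + C v 7) + (-10) * (-2 * C v 7 + C v 6 + C v 8 + C v 5) + (-8) * (-2 * C v 8 + C v 7 + C v 9) + (-6) * (-2 * C v 9 + C v 8 + C v 10) + (-4) * (-2 * C v 10 + C v 9 + C v 11) + (-2) * (-2 * C v 11 + C v 10)" by (simp add: algebra_simps)
  moreover have "n dvd (-4) * (-2 * C v 4 + C v 6) + (-5) * (-2 * C v 5 + C v 7) + (-7) * (-2 * C v 6 + C v 4 + C v 7) + (-10) * (-2 * C v 7 + C v 6 + C v 8 + C v 5) + (-8) * (-2 * C v 8 + C v 7 + C v 9) + (-6) * (-2 * C v 9 + C v 8 + C v 10) + (-4) * (-2 * C v 10 + C v 9 + C v 11) + (-2) * (-2 * C v 11 + C v 10)" by (intro dvd_add dvd_mult r4 r5 r6 r7 r8 r9 r10 r11)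
  ultimately have c4: "n dvd C v 4" by simp
  have "C v 5 = (-5) * (-2 * C v 4 + C v 6) + (-8) * (-2 * C v 5 + C v 7) + (-10) * (-2 * C v 6 + C v 4 + C v 7) + (-15) * (-2 * C v 7 + C v 6 + C v 8 + C v 5) + (-12) * (-2 * C v 8 + C v 7 + C v 9) + (-9) * (-2 * C v 9 + C v 8 + C v 10) + (-6) * (-2 * C v 10 + C v 9 + C v 11) + (-3) * (-2 * C v 11 + C v 10)" by (simp add: algebra_simps)
  moreover have "n dvd (-5) * (-2 * C v 4 + C v 6) + (-8) * (-2 * C v 5 + C v 7) + (-10) * (-2 * C v 6 + C v 4 + C v 7) + (-15) * (-2 * C v 7 + C v 6 + C v 8 + C v 5) + (-12) * (-2 * C v 8 + C v 7 + C v 9) + (-9) * (-2 * C v 9 + C v 8 + C v 10) + (-6) * (-2 * C v 10 + C v 9 + C v 11) + (-3) * (-2 * C v 11 + C v 10)" by (intro dvd_add dvd_mult r4 r5 r6 r7 r8 r9 r10 r11)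
  ultimately have c5: "n dvd C v 5" by simp
  have "C v 6 = (-7) * (-2 * C v 4 + C v 6) + (-10) * (-2 * C v 5 + C v 7) + (-14) * (-2 * C v 6 + C v 4 + C v 7) + (-20) * (-2 * C v 7 + C v 6 + C v 8 + C v 5) + (-16) * (-2 * C v 8 + C v 7 + C v 9) + (-12) * (-2 * C v 9 + C v 8 + C v 10) + (-8) * (-2 * C v 10 + C v 9 + C v 11) + (-4) * (-2 * C v 11 + C v 10)" by (simp add: algebra_simps)
  moreover have "n dvd (-7) * (-2 * C v 4 + C v 6) + (-10) * (-2 * C v 5 + C v 7) + (-14) * (-2 * C v 6 + C v 4 + C v 7) + (-20) * (-2 * C v 7 + C v 6 + C v 8 + C v 5) + (-16) * (-2 * C v 8 + C v 7 + C v 9) + (-12) * (-2 * C v 9 + C v 8 + C v 10) + (-8) * (-2 * C v 10 + C v 9 + C v 11) + (-4) * (-2 * C v 11 + C v 10)" by (intro dvd_add dvd_mult r4 r5 r6 r7 r8 r9 r10 r11)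
  ultimately have c6: "n dvd C v 6" by simp
  have "C v 7 = (-10) * (-2 * C v 4 + C v 6) + (-15) * (-2 * C v 5 + C v 7) + (-20) * (-2 * C v 6 + C v 4 + C v 7) + (-30) * (-2 * C v 7 + C v 6 + C v 8 + C v 5) + (-24) * (-2 * C v 8 + C v 7 + C v 9) + (-18) * (-2 * C v 9 + C v 8 + C v 10) + (-12) * (-2 * C v 10 + C v 9 + C v 11) + (-6) * (-2 * C v 11 + C v 10)" by (simp add: algebra_simps)
  moreover have "n dvd (-10) * (-2 * C v 4 + C v 6) + (-15) * (-2 * C v 5 + C v 7) + (-20) * (-2 * C v 6 + C v 4 + C v 7) + (-30) * (-2 * C v 7 + C v 6 + C v 8 + C v 5) + (-24) * (-2 * C v 8 + C v 7 + C v 9) + (-18) * (-2 * C v 9 + C v 8 + C v 10) + (-12) * (-2 * C v 10 + C v 9 + C v 11) + (-6) * (-2 * C v 11 + C v 10)" by (intro dvd_add dvd_mult r4 r5 r6 r7 r8 r9 r10 r11)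
  ultimately have c7: "n dvd C v 7" by simp
  have "C v 8 = (-8) * (-2 * C v 4 + C v 6) + (-12) * (-2 * C v 5 + C v 7) + (-16) * (-2 * C v 6 + C v 4 + C v 7) + (-24) * (-2 * C v 7 + C v 6 + C v 8 + C v 5) + (-20) * (-2 * C v 8 + C v 7 + C v 9) + (-15) * (-2 * C v 9 + C v 8 + C v 10) + (-10) * (-2 * C v 10 + C v 9 + C v 11) + (-5) * (-2 * C v 11 + C v 10)" by (simp add: algebra_simps)
  moreover have "n dvd (-8) * (-2 * C v 4 + C v 6) + (-12) * (-2 * C v 5 + C v 7) + (-16) * (-2 * C v 6 + C v 4 + C v 7) + (-24) * (-2 * C v 7 + C v 6 + C v 8 + C v 5) + (-20) * (-2 * C v 8 + C v 7 + C v 9) + (-15) * (-2 * C v 9 + C v 8 + C v 10) + (-10) * (-2 * C v 10 + C v 9 + C v 11) + (-5) * (-2 * C v 11 + C v 10)" by (intro dvd_add dvd_mult r4 r5 r6 r7 r8 r9 r10 r11)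
  ultimately have c8: "n dvd C v 8" by simp
  have "C v 9 = (-6) * (-2 * C v 4 + C v 6) + (-9) * (-2 * C v 5 + C v 7) + (-12) * (-2 * C v 6 + C v 4 + C v 7) + (-18) * (-2 * C v 7 + C v 6 + C v 8 + C v 5) + (-15) * (-2 * C v 8 + C v 7 + C v 9) + (-12) * (-2 * C v 9 + C v 8 + C v 10) + (-8) * (-2 * C v 10 + C v 9 + C v 11) + (-4) * (-2 * C v 11 + C v 10)" by (simp add: algebra_simps)
  moreover have "n dvd (-6) * (-2 * C v 4 + C v 6) + (-9) * (-2 * C v 5 + C v 7) + (-12) * (-2 * C v 6 + C v 4 + C v 7) + (-18) * (-2 * C v 7 + C v 6 + C v 8 + C v 5) + (-15) * (-2 * C v 8 + C v 7 + C v 9) + (-12) * (-2 * C v 9 + C v 8 + C v 10) + (-8) * (-2 * C v 10 + C v 9 + C v 11) + (-4) * (-2 * C v 11 + C v 10)" by (intro dvd_add dvd_mult r4 r5 r6 r7 r8 r9 r10 r11)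
  ultimately have c9: "n dvd C v 9" by simp
  have "C v 10 = (-4) * (-2 * C v 4 + C v 6) + (-6) * (-2 * C v 5 + C v 7) + (-8) * (-2 * C v 6 + C v 4 + C v 7) + (-12) * (-2 * C v 7 + C v 6 + C v 8 + C v 5) + (-10) * (-2 * C v 8 + C v 7 + C v 9) + (-8) * (-2 * C v 9 + C v 8 + C v 10) + (-6) * (-2 * C v 10 + C v 9 + C v 11) + (-3) * (-2 * C v 11 + C v 10)" by (simp add: algebra_simps)
  moreover have "n dvd (-4) * (-2 * C v 4 + C v 6) + (-6) * (-2 * C v 5 + C v 7) + (-8) * (-2 * C v 6 + C v 4 + C v 7) + (-12) * (-2 * C v 7 + C v 6 + C v 8 + C v 5) + (-10) * (-2 * C v 8 + C v 7 + C v 9) + (-8) * (-2 * C v 9 + C v 8 + C v 10) + (-6) * (-2 * C v 10 + C v 9 + C v 11) + (-3) * (-2 * C v 11 + C v 10)" by (intro dvd_add dvd_mult r4 r5 r6 r7 r8 r9 r10 r11)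
  ultimately have c10: "n dvd C v 10" by simp
  have "C v 11 = (-2) * (-2 * C v 4 + C v 6) + (-3) * (-2 * C v 5 + C v 7) + (-4) * (-2 * C v 6 + C v 4 + C v 7) + (-6) * (-2 * C v 7 + C v 6 + C v 8 + C v 5) + (-5) * (-2 * C v 8 + C v 7 + C v 9) + (-4) * (-2 * C v 9 + C v 8 + C v 10) + (-3) * (-2 * C v 10 + C v 9 + C v 11) + (-2) * (-2 * C v 11 + C v 10)" by (simp add: algebra_simps)
  moreover have "n dvd (-2) * (-2 * C v 4 + C v 6) + (-3) * (-2 * C v 5 + C v 7) + (-4) * (-2 * C v 6 + C v 4 + C v 7) + (-6) * (-2 * C v 7 + C v 6 + C v 8 + C v 5) + (-5) * (-2 * C v 8 + C v 7 + C v 9) + (-4) * (-2 * C v 9 + C v 8 + C v 10) + (-3) * (-2 * C v 10 + C v 9 + C v 11) + (-2) * (-2 * C v 11 + C v 10)" by (intro dvd_add dvd_mult r4 r5 r6 r7 r8 r9 r10 r11)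
  ultimately have c11: "n dvd C v 11" by simp
  show ?thesis
  proof (intro allI impI)
    fix k :: nat assume "k < 12"
    then have "k \<in> {..<12}" by simp
    then have "k \<in> {0,1,2,3,4,5,6,7,8,9,10,11}" unfolding lt12 .
    then show "n dvd C v k" using c0 c1 c2 c3 c4 c5 c6 c7 c8 c9 c10 c11 by auto
  qed
qed

lemma int_subgroup:
  fixes S :: "int set"
  assumes z: "0 \<in> S" and sub: "\<And>x y. x \<in> S \<Longrightarrow> y \<in> S \<Longrightarrow> x - y \<in> S"
  shows "\<exists>g\<ge>0. g \<in> S \<and> (\<forall>s\<in>S. g dvd s)"
proof (cases "S \<subseteq> {0}")
  case True then show ?thesis using z by (intro exI[of _ 0]) auto
next
  case False
  then obtain s where s: "s \<in> S" "s \<noteq> 0" by auto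
  have neg: "- x \<in> S" if "x \<in> S" for x using sub[OF z that] by simp
  have add: "x + y \<in> S" if "x \<in> S" "y \<in> S" for x y using sub[OF that(1) neg[OF that(2)]] by simp
  have multn: "int n * x \<in> S" if "x \<in> S" for n x
    by (induction n) (auto simp: z algebra_simps intro: add[OF that])
  have mult: "k * x \<in> S" if "x \<in> S" for k x
  proof (cases "k \<ge> 0")
    case True then show ?thesis using multn[OF that, of "nat k"] by simp
  next
    case False then show ?thesis using neg[OF multn[OF that, of "nat (-k)"]] by simp
  qed
  have ex: "\<exists>n::nat. n > 0 \<and> int n \<in> S"
  proof (cases "s > 0")
    case True then show ?thesis using s by (intro exI[of _ "nat s"]) auto
  next
    case False then show ?thesis using s neg[OF s(1)] by (intro exI[of _ "nat (-s)"]) auto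
  qed
  define g where "g = (LEAST n::nat. n > 0 \<and> int n \<in> S)"
  have g: "g > 0" "int g \<in> S" using LeastI_ex[OF ex] unfolding g_def by auto
  have gmin: "\<not> (m > 0 \<and> int m \<in> S)" if "m < g" for m
    using not_less_Least[of m "\<lambda>n. n > 0 \<and> int n \<in> S"] that unfolding g_def by blast
  have "int g dvd t" if t: "t \<in> S" for t
  proof -
    have r: "t mod int g \<in> S"
    proof -
      have "t mod int g = t - (t div int g) * int g" by (simp add: minus_div_mult_eq_mod)
      then show ?thesis using sub[OF t mult[OF g(2)]] by simp
    qed
    have "0 \<le> t mod int g" "t mod int g < int g" using g(1) by auto
    then have "t mod int g = 0"
    proof (rule_tac ccontr)
      assume a: "0 \<le> t mod int g" "t mod int g < int g" "t mod int g \<noteq> 0"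
      then have "nat (t mod int g) < g" "nat (t mod int g) > 0" "int (nat (t mod int g)) \<in> S"
        using r by auto
      then show False using gmin by blast
    qed
    then show ?thesis by (simp add: dvd_eq_mod_eq_0)
  qed
  then show ?thesis using g by (intro exI[of _ "int g"]) auto
qed

lemma bfE3: "bf x (E 3) = C x 2"
  by (simp add: bf_explicit C_E)

context
  fixes d f1 f2 :: "int^12"
  assumes d: "bf d d = -2"
    and f1d: "bf f1 d = 0" and f2d: "bf f2 d = 0"
    and iso11: "bf f1 f1 = 0" and iso12: "bf f1 f2 = 0" and iso22: "bf f2 f2 = 0"
    and indep: "\<forall>a c. a *s f1 + c *s f2 = 0 \<longrightarrow> a = 0 \<and> c = 0"
    and prim: "\<forall>x. bf x d = 0 \<longrightarrow> (\<forall>n::int. n \<noteq> 0 \<longrightarrow> (\<exists>a c. n *s x = a *s f1 + c *s f2)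
                  \<longrightarrow> (\<exists>a c. x = a *s f1 + c *s f2))"
begin

lemma primP:
  assumes v: "bf v d = 0" and g0: "g \<ge> 0" and h: "\<forall>x. bf x d = 0 \<longrightarrow> 2 * g dvd bf v x"
    and vr: "v = r *s f1 + t *s f2"
  shows "g dvd r \<and> g dvd t"
proof -
  have cv: "\<forall>k<12. g dvd C v k" by (rule unimod[OF d v h])
  show ?thesis
  proof (cases "g = 0")
    case True
    then have "v = 0" using cv by (simp add: vec12_eq)
    then have "r = 0 \<and> t = 0" using indep vr by auto
    then show ?thesis by simp
  next
    case False
    define u where "u = (\<chi> i. v $ i div g)"
    have Cu: "C u k = C v k div g" for k by (simp add: u_def C_def)
    have gu: "g *s u = v" using cv by (simp add: vec12_eq Cu)
    have "g * bf u d = 0" using v gu bf_smult_left[of g u d] by simp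
    then have ud: "bf u d = 0" using False by simp
    have "\<exists>a c. g *s u = a *s f1 + c *s f2" using gu vr by blast
    then obtain a c where uac: "u = a *s f1 + c *s f2" using prim ud False by blast
    have "(g * a - r) *s f1 + (g * c - t) *s f2 = 0"
    proof -
      have "\<forall>k<12. g * (a * C f1 k + c * C f2 k) = r * C f1 k + t * C f2 k"
        using gu vr uac by (auto simp: vec12_eq algebra_simps)
      then show ?thesis by (simp add: vec12_eq algebra_simps)
    qed
    then have "g * a - r = 0 \<and> g * c - t = 0" using indep by blast
    then show ?thesis by auto
  qed
qed

lemma exists_u1: "\<exists>u. bf u d = 0 \<and> bf u f1 = 2"
proof -
  let ?S = "{k. \<exists>x. bf x d = 0 \<and> bf x f1 = 2 * k}"
  have "0 \<in> ?S" by (auto intro: exI[of _ 0] simp: bf_lin)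
  moreover have "x - y \<in> ?S" if xS: "x \<in> ?S" and yS: "y \<in> ?S" for x y
  proof -
    obtain a where "bf a d = 0" "bf a f1 = 2 * x" using xS unfolding mem_Collect_eq by blast
    moreover obtain b where "bf b d = 0" "bf b f1 = 2 * y" using yS unfolding mem_Collect_eq by blast
    ultimately
    show ?thesis by (auto intro!: exI[of _ "a - b"] simp: bf_lin algebra_simps)
  qed
  ultimately obtain g where g: "g \<ge> 0" "g \<in> ?S" "\<forall>s\<in>?S. g dvd s" using int_subgroup[of ?S] by blast
  have "\<forall>x. bf x d = 0 \<longrightarrow> 2 * g dvd bf f1 x"
  proof (intro allI impI)
    fix x assume xd: "bf x d = 0"
    have "even (bf x f1)" by (rule dperp_even[OF d xd f1d])
    then have e: "bf x f1 = 2 * (bf x f1 div 2)" by simp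
    then have "bf x f1 div 2 \<in> ?S" using xd by blast
    then have "g dvd bf x f1 div 2" using g(3) by blast
    then show "2 * g dvd bf f1 x" using e bf_sym[of f1 x] by (metis mult_dvd_mono dvd_refl)
  qed
  moreover have "f1 = 1 *s f1 + 0 *s f2" by (simp add: vec12_eq)
  ultimately have "g dvd 1" using primP[OF f1d g(1)] by blast
  then have "g = 1" using g(1) by simp
  then show ?thesis using g(2) by auto
qed

lemma exists_u2: "\<exists>u. bf u d = 0 \<and> bf u f1 = 0 \<and> bf u f2 = 2"
proof -
  obtain u1 where u1: "bf u1 d = 0" "bf u1 f1 = 2" using exists_u1 by blast
  define c where "c = bf u1 f2 div 2"
  have c: "bf u1 f2 = 2 * c" using dperp_even[OF d u1(1) f2d] unfolding c_def by simp
  let ?S = "{k. \<exists>x. bf x d = 0 \<and> bf x f1 = 0 \<and> bf x f2 = 2 * k}"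
  have "0 \<in> ?S" by (auto intro: exI[of _ 0] simp: bf_lin)
  moreover have "x - y \<in> ?S" if xS: "x \<in> ?S" and yS: "y \<in> ?S" for x y
  proof -
    obtain a where "bf a d = 0" "bf a f1 = 0" "bf a f2 = 2 * x" using xS unfolding mem_Collect_eq by blast
    moreover obtain b where "bf b d = 0" "bf b f1 = 0" "bf b f2 = 2 * y" using yS unfolding mem_Collect_eq by blast
    ultimately
    show ?thesis by (auto intro!: exI[of _ "a - b"] simp: bf_lin algebra_simps)
  qed
  ultimately obtain g where g: "g \<ge> 0" "g \<in> ?S" "\<forall>s\<in>?S. g dvd s" using int_subgroup[of ?S] by blast
  have vd: "bf (f2 - c *s f1) d = 0" using f1d f2d by (simp add: bf_lin)
  have "\<forall>x. bf x d = 0 \<longrightarrow> 2 * g dvd bf (f2 - c *s f1) x"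
  proof (intro allI impI)
    fix x assume xd: "bf x d = 0"
    define m where "m = bf x f1 div 2"
    have m: "bf x f1 = 2 * m" using dperp_even[OF d xd f1d] unfolding m_def by simp
    define x' where "x' = x - m *s u1"
    have x'd: "bf x' d = 0" using xd u1 by (simp add: x'_def bf_lin)
    have x'1: "bf x' f1 = 0" using m u1 by (simp add: x'_def bf_lin)
    have x'2: "bf x' f2 = bf x f2 - 2 * m * c" using c by (simp add: x'_def bf_lin)
    have "even (bf x' f2)" by (rule dperp_even[OF d x'd f2d])
    then have e: "bf x' f2 = 2 * (bf x' f2 div 2)" by simp
    then have "bf x' f2 div 2 \<in> ?S" using x'd x'1 by blast
    then have "g dvd bf x' f2 div 2" using g(3) by blast
    then have "2 * g dvd bf x' f2" using e by (metis mult_dvd_mono dvd_refl)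
    moreover have "bf x' f2 = bf (f2 - c *s f1) x"
      using x'2 m by (simp add: bf_lin bf_sym[of x] algebra_simps)
    ultimately show "2 * g dvd bf (f2 - c *s f1) x" by simp
  qed
  moreover have "f2 - c *s f1 = (- c) *s f1 + 1 *s f2" by (simp add: vec12_eq)
  ultimately have "g dvd 1" using primP[OF vd g(1)] by blast
  then have "g = 1" using g(1) by simp
  then show ?thesis using g(2) by auto
qed

lemma exists_y: "\<exists>y1 y2. bf y1 d = 0 \<and> bf y2 d = 0 \<and> bf y1 f1 = 2 \<and> bf y1 f2 = 0 \<and> bf y2 f1 = 0
   \<and> bf y2 f2 = 2 \<and> bf y1 y1 = 0 \<and> bf y2 y2 = 0 \<and> bf y1 y2 = 0"
proof -
  obtain u1 where u1: "bf u1 d = 0" "bf u1 f1 = 2" using exists_u1 by blast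
  obtain u2 where u2: "bf u2 d = 0" "bf u2 f1 = 0" "bf u2 f2 = 2" using exists_u2 by blast
  define k where "k = bf u1 f2 div 2"
  have k: "bf u1 f2 = 2 * k" using dperp_even[OF d u1(1) f2d] unfolding k_def by simp
  define v1 where "v1 = u1 - k *s u2"
  have v1: "bf v1 d = 0" "bf v1 f1 = 2" "bf v1 f2 = 0" by (simp_all add: v1_def bf_lin u1 u2 k)
  define c where "c = C d 2"
  have codd: "odd c" using root_odd[OF d] unfolding c_def by simp
  define w where "w = 2 *s E 3 + c *s d"
  have E3d: "bf (E 3) d = c" using bfE3[of d] bf_sym[of d "E 3"] unfolding c_def by simp
  have wd: "bf w d = 0" using d E3d by (simp add: w_def bf_lin)
  have bxw: "bf x w = 2 * C x 2" if "bf x d = 0" for x using that by (simp add: w_def bf_lin bfE3)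
  have E3E3: "bf (E 3) (E 3) = 0" by (simp add: bfE3 C_E)
  have ww: "bf w w = 2 * c^2"
  proof -
    show ?thesis using E3E3 E3d bf_sym[of d "E 3"] d by (simp add: w_def bf_lin power2_eq_square algebra_simps)
  qed
  have evf: "even (C f 2)" if "bf f d = 0" "bf f f = 0" for f
  proof -
    have "4 dvd (0 - 2 * C f 2)" using dperp_norm[OF d that(1)] that(2) by simp
    then show ?thesis by presburger
  qed
  have e1: "even (C f1 2)" using evf f1d iso11 by blast
  have e2: "even (C f2 2)" using evf f2d iso22 by blast
  define z where "z = w - C f1 2 *s v1 - C f2 2 *s u2"
  have wf1: "bf w f1 = 2 * C f1 2" using bxw[OF f1d] bf_sym[of w f1] by simp
  have wf2: "bf w f2 = 2 * C f2 2" using bxw[OF f2d] bf_sym[of w f2] by simp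
  have z: "bf z d = 0" "bf z f1 = 0" "bf z f2 = 0"
    using wd v1 u2 wf1 wf2 by (simp_all add: z_def bf_lin)
  have "2 * C z 2 = bf z w" using bxw[OF z(1)] by simp
  also have "\<dots> = 2 * c^2 - C f1 2 * (2 * C v1 2) - C f2 2 * (2 * C u2 2)"
    using ww bxw[OF v1(1)] bxw[OF u2(1)] by (simp add: z_def bf_lin)
  finally have "C z 2 = c^2 - C f1 2 * C v1 2 - C f2 2 * C u2 2" by simp
  then have zodd: "odd (C z 2)" using codd e1 e2 by simp
  define y1' where "y1' = (if even (C v1 2) then v1 else v1 + z)"
  define y2' where "y2' = (if even (C u2 2) then u2 else u2 + z)"
  have y1': "bf y1' d = 0" "bf y1' f1 = 2" "bf y1' f2 = 0" "even (C y1' 2)"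
    using v1 z zodd by (auto simp: y1'_def bf_lin)
  have y2': "bf y2' d = 0" "bf y2' f1 = 0" "bf y2' f2 = 2" "even (C y2' 2)"
    using u2 z zodd by (auto simp: y2'_def bf_lin)
  have n1: "4 dvd bf y1' y1'"
  proof -
    have "4 dvd 2 * C y1' 2" using y1'(4) by (auto elim!: evenE)
    from dvd_add[OF dperp_norm[OF d y1'(1)] this] show ?thesis by simp
  qed
  have n2: "4 dvd bf y2' y2'"
  proof -
    have "4 dvd 2 * C y2' 2" using y2'(4) by (auto elim!: evenE)
    from dvd_add[OF dperp_norm[OF d y2'(1)] this] show ?thesis by simp
  qed
  define a1 where "a1 = bf y1' y1' div 4"
  have a1: "bf y1' y1' = 4 * a1" using n1 unfolding a1_def by simp
  define y1 where "y1 = y1' - a1 *s f1"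
  have y1: "bf y1 d = 0" "bf y1 f1 = 2" "bf y1 f2 = 0" "bf y1 y1 = 0"
    using y1' f1d iso11 iso12 a1 bf_sym[of f1 y1'] by (simp_all add: y1_def bf_lin)
  define a2 where "a2 = bf y2' y2' div 4"
  have a2: "bf y2' y2' = 4 * a2" using n2 unfolding a2_def by simp
  define c2 where "c2 = bf y1 y2' div 2"
  have c2: "bf y1 y2' = 2 * c2" using dperp_even[OF d y1(1) y2'(1)] unfolding c2_def by simp
  define y2 where "y2 = y2' - a2 *s f2 - c2 *s f1"
  have y2: "bf y2 d = 0" "bf y2 f1 = 0" "bf y2 f2 = 2" "bf y2 y2 = 0" "bf y1 y2 = 0"
    using y2' f1d f2d iso11 iso12 iso22 a2 c2 y1 bf_sym[of f1 y2'] bf_sym[of f2 y2'] bf_sym[of f2 f1]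
      bf_sym[of f1 y1] bf_sym[of f2 y1]
    by (simp_all add: y2_def bf_lin algebra_simps)
  show ?thesis using y1 y2 by blast
qed

end

lemma bfC_sym: "bfC x y = bfC y x"
  unfolding bfC_def
  by (subst sum.swap) (simp add: gram_sym algebra_simps)

lemma bfC_add_left: "bfC (x + y) z = bfC x z + bfC y z"
  unfolding bfC_def by (simp add: algebra_simps sum.distrib)
lemma bfC_add_right: "bfC z (x + y) = bfC z x + bfC z y"
  unfolding bfC_def by (simp add: algebra_simps sum.distrib)
lemma bfC_smult_left: "bfC (c *s x) z = c * bfC x z"
  unfolding bfC_def by (simp add: sum_distrib_left algebra_simps)
lemma bfC_smult_right: "bfC z (c *s x) = c * bfC z x"
  unfolding bfC_def by (simp add: sum_distrib_left algebra_simps)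
lemma bfC_diff_left: "bfC (x - y) z = bfC x z - bfC y z"
  using bfC_add_left[of "x - y" y z] by simp
lemma bfC_diff_right: "bfC z (x - y) = bfC z x - bfC z y"
  using bfC_add_right[of z "x - y" y] by simp
lemma bfC_zero_left: "bfC 0 z = 0" unfolding bfC_def by simp
lemma bfC_zero_right: "bfC z 0 = 0" unfolding bfC_def by simp

lemmas bfC_lin = bfC_add_left bfC_add_right bfC_smult_left bfC_smult_right bfC_diff_left bfC_diff_right
  bfC_zero_left bfC_zero_right

lemma bfC_cvec: "bfC (cvec x) (cvec y) = of_int (bf x y)"
  unfolding bfC_def bf_def cvec_def by simp

lemma cvec_add: "cvec (x + y) = cvec x + cvec y" by (simp add: cvec_def vec_eq_iff)
lemma cvec_smult: "cvec (c *s x) = of_int c *s cvec x" by (simp add: cvec_def vec_eq_iff)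
lemma cvec_inj: "cvec x = cvec y \<Longrightarrow> x = y" by (simp add: cvec_def vec_eq_iff)

lemma cconj_add: "cconj (x + y) = cconj x + cconj y" by (simp add: cconj_def vec_eq_iff)
lemma cconj_diff: "cconj (x - y) = cconj x - cconj y" by (simp add: cconj_def vec_eq_iff)
lemma cconj_smult: "cconj (c *s x) = cnj c *s cconj x" by (simp add: cconj_def vec_eq_iff)
lemma cconj_cvec: "cconj (cvec x) = cvec x" by (simp add: cconj_def cvec_def vec_eq_iff)
lemma bfC_cconj: "bfC (cconj x) (cconj y) = cnj (bfC x y)"
  unfolding bfC_def cconj_def by (simp add: cnj_sum)
lemma cconj_cconj: "cconj (cconj x) = x" by (simp add: cconj_def vec_eq_iff)

definition Vc :: "complex^12 \<Rightarrow> complex^12 \<Rightarrow> complex^12 \<Rightarrow> complex^12 \<Rightarrow> complex \<Rightarrow> complex \<Rightarrow> complex \<Rightarrow> complex \<Rightarrow> complex^12 \<Rightarrow> complex^12" where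
  "Vc F1 F2 Y1 Y2 s1 s2 t1 t2 w = w + s1 *s F1 + s2 *s F2 + t1 *s Y1 + t2 *s Y2"

lemma Vc_comp: "Vc F1 F2 Y1 Y2 s1 s2 t1 t2 (Vc F1 F2 Y1 Y2 s1' s2' t1' t2' w) =
   Vc F1 F2 Y1 Y2 (s1 + s1') (s2 + s2') (t1 + t1') (t2 + t2') w"
  by (simp add: Vc_def vec_eq_iff algebra_simps)

lemma Vc_zero: "Vc F1 F2 Y1 Y2 0 0 0 0 w = w" by (simp add: Vc_def)

lemma Vc0: "s1 = 0 \<Longrightarrow> s2 = 0 \<Longrightarrow> t1 = 0 \<Longrightarrow> t2 = 0 \<Longrightarrow> Vc F1 F2 Y1 Y2 s1 s2 t1 t2 w = w"
  by (simp add: Vc_def)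

definition Gc :: "complex^12 \<Rightarrow> complex^12 \<Rightarrow> complex^12 \<Rightarrow> complex^12 \<Rightarrow> complex \<Rightarrow> complex \<Rightarrow> complex \<Rightarrow> complex \<Rightarrow> complex^12 \<Rightarrow> complex^12" where
  "Gc F1 F2 Y1 Y2 a b c e w =
     (let p1 = bfC w Y1 / 2; p2 = bfC w Y2 / 2; q1 = bfC w F1 / 2; q2 = bfC w F2 / 2 in
      Vc F1 F2 Y1 Y2 ((a-1)*p1 + b*p2) (c*p1 + (e-1)*p2) ((e-1)*q1 - c*q2) ((a-1)*q2 - b*q1) w)"

lemma cont_smult[continuous_intros]:
  fixes k :: "real \<Rightarrow> complex"
  shows "continuous_on S k \<Longrightarrow> continuous_on S (\<lambda>t. k t *s (V::complex^12))"
  unfolding vector_scalar_mult_def by (intro continuous_intros)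

lemma cont_ofr[continuous_intros]:
  "continuous_on S f \<Longrightarrow> continuous_on S (\<lambda>t. complex_of_real (f t))"
  by (rule continuous_on_compose2[OF continuous_on_of_real_id[of UNIV]]) auto

lemma Gc_add: "Gc F1 F2 Y1 Y2 a b c e (w + w') = Gc F1 F2 Y1 Y2 a b c e w + Gc F1 F2 Y1 Y2 a b c e w'"
  unfolding Gc_def Let_def Vc_def by (simp add: bfC_lin vec_eq_iff algebra_simps add_divide_distrib)

lemma Gc_smult: "Gc F1 F2 Y1 Y2 a b c e (k *s w) = k *s Gc F1 F2 Y1 Y2 a b c e w"
  unfolding Gc_def Let_def Vc_def by (simp add: bfC_lin vec_eq_iff algebra_simps)

context
  fixes F1 F2 Y1 Y2 :: "complex^12"
  assumes FF: "bfC F1 F1 = 0" "bfC F1 F2 = 0" "bfC F2 F1 = 0" "bfC F2 F2 = 0"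
    and YF: "bfC Y1 F1 = 2" "bfC Y1 F2 = 0" "bfC Y2 F1 = 0" "bfC Y2 F2 = 2"
    and FY: "bfC F1 Y1 = 2" "bfC F2 Y1 = 0" "bfC F1 Y2 = 0" "bfC F2 Y2 = 2"
    and YY: "bfC Y1 Y1 = 0" "bfC Y1 Y2 = 0" "bfC Y2 Y1 = 0" "bfC Y2 Y2 = 0"
begin

lemma Vc_Y1: "bfC (Vc F1 F2 Y1 Y2 s1 s2 t1 t2 w) Y1 = bfC w Y1 + 2 * s1"
  by (simp add: Vc_def bfC_lin FF YF FY YY)
lemma Vc_Y2: "bfC (Vc F1 F2 Y1 Y2 s1 s2 t1 t2 w) Y2 = bfC w Y2 + 2 * s2"
  by (simp add: Vc_def bfC_lin FF YF FY YY)
lemma Vc_F1: "bfC (Vc F1 F2 Y1 Y2 s1 s2 t1 t2 w) F1 = bfC w F1 + 2 * t1"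
  by (simp add: Vc_def bfC_lin FF YF FY YY)
lemma Vc_F2: "bfC (Vc F1 F2 Y1 Y2 s1 s2 t1 t2 w) F2 = bfC w F2 + 2 * t2"
  by (simp add: Vc_def bfC_lin FF YF FY YY)

lemma Vc_iso: "bfC (Vc F1 F2 Y1 Y2 s1 s2 t1 t2 w) (Vc F1 F2 Y1 Y2 s1' s2' t1' t2' w') =
  bfC w w' + s1' * bfC w F1 + s2' * bfC w F2 + t1' * bfC w Y1 + t2' * bfC w Y2
  + s1 * bfC F1 w' + s2 * bfC F2 w' + t1 * bfC Y1 w' + t2 * bfC Y2 w'
  + 2 * (s1 * t1' + s2 * t2' + t1 * s1' + t2 * s2')"
  by (simp add: Vc_def bfC_lin FF YF FY YY algebra_simps)

lemma Gc_iso: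
  assumes det: "a * e - b * c = 1"
  shows "bfC (Gc F1 F2 Y1 Y2 a b c e w) (Gc F1 F2 Y1 Y2 a b c e w') = bfC w w'"
proof -
  define p1 where "p1 = bfC w Y1 / 2"
  define p2 where "p2 = bfC w Y2 / 2"
  define q1 where "q1 = bfC w F1 / 2"
  define q2 where "q2 = bfC w F2 / 2"
  define P1 where "P1 = bfC w' Y1 / 2"
  define P2 where "P2 = bfC w' Y2 / 2"
  define Q1 where "Q1 = bfC w' F1 / 2"
  define Q2 where "Q2 = bfC w' F2 / 2"
  have h: "bfC w Y1 = 2 * p1" "bfC w Y2 = 2 * p2" "bfC w F1 = 2 * q1" "bfC w F2 = 2 * q2"
     "bfC Y1 w' = 2 * P1" "bfC Y2 w' = 2 * P2" "bfC F1 w' = 2 * Q1" "bfC F2 w' = 2 * Q2"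
    by (simp_all add: p1_def p2_def q1_def q2_def P1_def P2_def Q1_def Q2_def bfC_sym[of _ w'])
  have key: "((a-1)*P1 + b*P2) * q1 + (c*P1 + (e-1)*P2) * q2 + ((e-1)*Q1 - c*Q2) * p1 + ((a-1)*Q2 - b*Q1) * p2
     + ((a-1)*p1 + b*p2) * Q1 + (c*p1 + (e-1)*p2) * Q2 + ((e-1)*q1 - c*q2) * P1 + ((a-1)*q2 - b*q1) * P2
     + (((a-1)*p1 + b*p2) * ((e-1)*Q1 - c*Q2) + (c*p1 + (e-1)*p2) * ((a-1)*Q2 - b*Q1)
        + ((e-1)*q1 - c*q2) * ((a-1)*P1 + b*P2) + ((a-1)*q2 - b*q1) * (c*P1 + (e-1)*P2)) = 0"
    using det by algebra
  show ?thesis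
    unfolding Gc_def Let_def Vc_iso
    unfolding p1_def[symmetric] p2_def[symmetric] q1_def[symmetric] q2_def[symmetric]
      P1_def[symmetric] P2_def[symmetric] Q1_def[symmetric] Q2_def[symmetric]
    unfolding h
    using key by (simp add: algebra_simps)
qed

lemma Gc_inv:
  assumes det: "a * e - b * c = 1"
  shows "Gc F1 F2 Y1 Y2 e (-b) (-c) a (Gc F1 F2 Y1 Y2 a b c e w) = w"
proof -
  define p1 where "p1 = bfC w Y1 / 2"
  define p2 where "p2 = bfC w Y2 / 2"
  define q1 where "q1 = bfC w F1 / 2"
  define q2 where "q2 = bfC w F2 / 2"
  have h: "bfC w Y1 = 2 * p1" "bfC w Y2 = 2 * p2" "bfC w F1 = 2 * q1" "bfC w F2 = 2 * q2"
    by (simp_all add: p1_def p2_def q1_def q2_def)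
  have G: "Gc F1 F2 Y1 Y2 a b c e w = Vc F1 F2 Y1 Y2 ((a-1)*p1 + b*p2) (c*p1 + (e-1)*p2) ((e-1)*q1 - c*q2) ((a-1)*q2 - b*q1) w"
    unfolding Gc_def Let_def p1_def p2_def q1_def q2_def ..
  define s1 where "s1 = (a-1)*p1 + b*p2"
  define s2 where "s2 = c*p1 + (e-1)*p2"
  define t1 where "t1 = (e-1)*q1 - c*q2"
  define t2 where "t2 = (a-1)*q2 - b*q1"
  have k1: "(e-1)*(p1 + s1) + (-b)*(p2 + s2) + s1 = 0" unfolding s1_def s2_def using det by algebra
  have k2: "(-c)*(p1 + s1) + (a-1)*(p2 + s2) + s2 = 0" unfolding s1_def s2_def using det by algebra
  have k3: "(a-1)*(q1 + t1) - (-c)*(q2 + t2) + t1 = 0" unfolding t1_def t2_def using det by algebra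
  have k4: "(e-1)*(q2 + t2) - (-b)*(q1 + t1) + t2 = 0" unfolding t1_def t2_def using det by algebra
  show ?thesis
    unfolding G s1_def[symmetric] s2_def[symmetric] t1_def[symmetric] t2_def[symmetric]
    apply (subst Gc_def)
    unfolding Let_def Vc_Y1 Vc_Y2 Vc_F1 Vc_F2 h Vc_comp
    apply (rule Vc0)
    unfolding s1_def s2_def t1_def t2_def
    using det by algebra+
qed

lemma Gc_cconj:
  assumes r: "cconj F1 = F1" "cconj F2 = F2" "cconj Y1 = Y1" "cconj Y2 = Y2"
  shows "cconj (Gc F1 F2 Y1 Y2 (of_real a) (of_real b) (of_real c) (of_real e) w) =
         Gc F1 F2 Y1 Y2 (of_real a) (of_real b) (of_real c) (of_real e) (cconj w)"
proof -
  have h: "bfC (cconj w) V = cnj (bfC w V)" if "cconj V = V" for V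
    using bfC_cconj[of w V] that by simp
  have rr: "cnj (V $ i) = V $ i" if "cconj V = V" for V i
    using that by (simp add: cconj_def vec_eq_iff)
  show ?thesis
    unfolding Gc_def Let_def Vc_def
    by (simp add: cconj_add cconj_diff cconj_smult h r rr[OF r(1)] rr[OF r(2)] rr[OF r(3)] rr[OF r(4)])
qed

lemma Gc_id: "Gc F1 F2 Y1 Y2 1 0 0 1 w = w"
  unfolding Gc_def Let_def by (rule Vc0) simp_all

lemma Gc_cone:
  assumes r: "cconj F1 = F1" "cconj F2 = F2" "cconj Y1 = Y1" "cconj Y2 = Y2"
    and m: "F1 \<in> complexification L" "F2 \<in> complexification L" "Y1 \<in> complexification L" "Y2 \<in> complexification L"
    and det: "a * e - b * c = 1" and w: "w \<in> period_cone L"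
  shows "Gc F1 F2 Y1 Y2 (of_real a) (of_real b) (of_real c) (of_real e) w \<in> period_cone L"
proof -
  let ?G = "Gc F1 F2 Y1 Y2 (of_real a) (of_real b) (of_real c) (of_real e)"
  have detC: "of_real a * of_real e - of_real b * of_real c = (1::complex)"
    using det by (metis of_real_1 of_real_diff of_real_mult)
  have wL: "w \<in> complexification L" and w0: "bfC w w = 0" and wp: "Re (bfC w (cconj w)) > 0"
    using w by (auto simp: period_cone_def)
  have "?G w \<in> complexification L"
    unfolding Gc_def Let_def Vc_def complexification_def
    using wL m unfolding complexification_def by (intro vec.span_add vec.span_scale) auto
  moreover have "bfC (?G w) (?G w) = 0" using Gc_iso[OF detC] w0 by simp
  moreover have "Re (bfC (?G w) (cconj (?G w))) > 0"
    using Gc_cconj[OF r] Gc_iso[OF detC] wp by simp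
  moreover then have "?G w \<noteq> 0" by (auto simp: bfC_zero_left)
  ultimately show ?thesis by (simp add: period_cone_def)
qed

lemma Gc_path:
  fixes ra rb rc re :: "real \<Rightarrow> real"
  assumes r: "cconj F1 = F1" "cconj F2 = F2" "cconj Y1 = Y1" "cconj Y2 = Y2"
    and m: "F1 \<in> complexification L" "F2 \<in> complexification L" "Y1 \<in> complexification L" "Y2 \<in> complexification L"
    and ca: "continuous_on {0..1} ra" and cb: "continuous_on {0..1} rb"
    and cc: "continuous_on {0..1} rc" and ce: "continuous_on {0..1} re"
    and det: "\<And>t. t \<in> {0..1} \<Longrightarrow> ra t * re t - rb t * rc t = 1"
    and w: "w \<in> period_cone L"
  shows "Gc F1 F2 Y1 Y2 (of_real (ra 1)) (of_real (rb 1)) (of_real (rc 1)) (of_real (re 1)) w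
     \<in> connected_component_set (period_cone L)
         (Gc F1 F2 Y1 Y2 (of_real (ra 0)) (of_real (rb 0)) (of_real (rc 0)) (of_real (re 0)) w)"
proof -
  let ?P = "\<lambda>t. Gc F1 F2 Y1 Y2 (of_real (ra t)) (of_real (rb t)) (of_real (rc t)) (of_real (re t)) w"
  have cont: "continuous_on {0..1} ?P"
    unfolding Gc_def Let_def Vc_def vector_scalar_mult_def
    by (intro continuous_intros ca cb cc ce)
  have conn: "connected (?P ` {0..1})"
    by (rule connected_continuous_image[OF cont]) simp
  have sub: "?P ` {0..1} \<subseteq> period_cone L"
    using Gc_cone[OF r m det w] by auto
  have "?P ` {0..1} \<subseteq> connected_component_set (period_cone L) (?P 0)"
    by (rule connected_component_maximal[OF _ conn sub]) auto
  moreover have "?P 1 \<in> ?P ` {0..1}" by simp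
  ultimately show ?thesis by blast
qed

lemma Gc_segment:
  fixes b1 b2 b3 b4 a1 a2 a3 a4 :: real
  assumes r: "cconj F1 = F1" "cconj F2 = F2" "cconj Y1 = Y1" "cconj Y2 = Y2"
    and m: "F1 \<in> complexification L" "F2 \<in> complexification L" "Y1 \<in> complexification L" "Y2 \<in> complexification L"
    and w: "w \<in> period_cone L"
    and detB: "b1 * b4 - b2 * b3 = 1" and detA: "a1 * a4 - a2 * a3 = 1"
    and pos: "\<And>t. t \<in> {0..1} \<Longrightarrow> ((1-t)*b1 + t*a1)*((1-t)*b4 + t*a4) - ((1-t)*b2 + t*a2)*((1-t)*b3 + t*a3) > 0"
  shows "Gc F1 F2 Y1 Y2 (of_real a1) (of_real a2) (of_real a3) (of_real a4) w
     \<in> connected_component_set (period_cone L) (Gc F1 F2 Y1 Y2 (of_real b1) (of_real b2) (of_real b3) (of_real b4) w)"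
proof -
  define D where "D t = ((1-t)*b1 + t*a1)*((1-t)*b4 + t*a4) - ((1-t)*b2 + t*a2)*((1-t)*b3 + t*a3)" for t
  have Dp: "D t > 0" if "t \<in> {0..1}" for t using pos[OF that] unfolding D_def by simp
  define ra where "ra t = ((1-t)*b1 + t*a1) / sqrt (D t)" for t
  define rb where "rb t = ((1-t)*b2 + t*a2) / sqrt (D t)" for t
  define rc where "rc t = ((1-t)*b3 + t*a3) / sqrt (D t)" for t
  define re where "re t = ((1-t)*b4 + t*a4) / sqrt (D t)" for t
  have cD: "continuous_on {0..1} D" unfolding D_def by (intro continuous_intros)
  have sq: "\<forall>t\<in>{0..1}. sqrt (D t) \<noteq> 0"
  proof
    fix t :: real assume "t \<in> {0..1}"
    then have "D t > 0" by (rule Dp)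
    then show "sqrt (D t) \<noteq> 0" by simp
  qed
  have ca: "continuous_on {0..1} ra" unfolding ra_def
    by (intro continuous_intros cD sq)
  have cb: "continuous_on {0..1} rb" unfolding rb_def
    by (intro continuous_intros cD sq)
  have cc: "continuous_on {0..1} rc" unfolding rc_def
    by (intro continuous_intros cD sq)
  have ce: "continuous_on {0..1} re" unfolding re_def
    by (intro continuous_intros cD sq)
  have det: "ra t * re t - rb t * rc t = 1" if "t \<in> {0..1}" for t
  proof -
    have "ra t * re t - rb t * rc t = (((1-t)*b1 + t*a1)*((1-t)*b4 + t*a4) - ((1-t)*b2 + t*a2)*((1-t)*b3 + t*a3)) / (sqrt (D t) * sqrt (D t))"
      unfolding ra_def rb_def rc_def re_def by (simp only: times_divide_times_eq diff_divide_distrib)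
    also have "\<dots> = D t / \<bar>D t\<bar>" unfolding D_def[symmetric] real_sqrt_mult_self ..
    also have "\<dots> = 1" using Dp[OF that] by simp
    finally show ?thesis .
  qed
  have D0: "D 0 = 1" "D 1 = 1" using detA detB unfolding D_def by simp_all
  have e0: "ra 0 = b1" "rb 0 = b2" "rc 0 = b3" "re 0 = b4" using D0 by (simp_all add: ra_def rb_def rc_def re_def)
  have e1: "ra 1 = a1" "rb 1 = a2" "rc 1 = a3" "re 1 = a4" using D0 by (simp_all add: ra_def rb_def rc_def re_def)
  show ?thesis using Gc_path[OF r m ca cb cc ce det w] unfolding e0 e1 .
qed

lemma Gc_component:
  fixes a b c e :: real
  assumes r: "cconj F1 = F1" "cconj F2 = F2" "cconj Y1 = Y1" "cconj Y2 = Y2"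
    and m: "F1 \<in> complexification L" "F2 \<in> complexification L" "Y1 \<in> complexification L" "Y2 \<in> complexification L"
    and w: "w \<in> period_cone L" and det: "a * e - b * c = 1"
  shows "Gc F1 F2 Y1 Y2 (of_real a) (of_real b) (of_real c) (of_real e) w \<in> connected_component_set (period_cone L) w"
proof -
  define sg :: real where "sg = (if c \<ge> b then 1 else -1)"
  have s2: "sg * sg = 1" unfolding sg_def by simp
  have sp: "sg * (c - b) \<ge> 0" unfolding sg_def by simp
  have pos0: "(1-t)^2 + t^2 > 0" if "t \<in> {0..1}" for t :: real
  proof (cases "t = 0")
    case True then show ?thesis by simp
  next
    case False then have "t^2 > 0" by simp
    then show ?thesis by (metis add_nonneg_pos zero_le_power2)
  qed
  have step1: "Gc F1 F2 Y1 Y2 (of_real 0) (of_real (-sg)) (of_real sg) (of_real 0) w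
     \<in> connected_component_set (period_cone L) (Gc F1 F2 Y1 Y2 (of_real 1) (of_real 0) (of_real 0) (of_real 1) w)"
  proof (rule Gc_segment[OF r m w])
    show "1 * 1 - 0 * 0 = (1::real)" by simp
    show "0 * 0 - - sg * sg = 1" using s2 by simp
    fix t :: real assume t: "t \<in> {0..1}"
    have "((1-t)*1 + t*0)*((1-t)*1 + t*0) - ((1-t)*0 + t*(-sg))*((1-t)*0 + t * sg) = (1-t)^2 + t^2"
      using s2 by (simp add: power2_eq_square algebra_simps)
    then show "((1-t)*1 + t*0)*((1-t)*1 + t*0) - ((1-t)*0 + t*(-sg))*((1-t)*0 + t * sg) > 0" using pos0[OF t] by simp
  qed
  have step2: "Gc F1 F2 Y1 Y2 (of_real a) (of_real b) (of_real c) (of_real e) w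
     \<in> connected_component_set (period_cone L) (Gc F1 F2 Y1 Y2 (of_real 0) (of_real (-sg)) (of_real sg) (of_real 0) w)"
  proof (rule Gc_segment[OF r m w])
    show "0 * 0 - - sg * sg = 1" using s2 by simp
    show "a * e - b * c = 1" by (rule det)
    fix t :: real assume t: "t \<in> {0..1}"
    have "((1-t)*0 + t*a)*((1-t)*0 + t*e) - ((1-t)*(-sg) + t*b)*((1-t) * sg + t*c)
        = (1-t)^2 + t^2 + (t*(1-t))*(sg*(c-b))"
    proof -
      have "((1-t)*0 + t*a)*((1-t)*0 + t*e) - ((1-t)*(-sg) + t*b)*((1-t) * sg + t*c)
          = t^2 * (a*e - b*c) + (1-t)^2 * (sg * sg) + (t*(1-t))*(sg*(c-b))"
        by (simp add: power2_eq_square algebra_simps)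
      then show ?thesis using det s2 by simp
    qed
    moreover have "(t*(1-t))*(sg*(c-b)) \<ge> 0"
    proof -
      have "t*(1-t) \<ge> 0" using t by simp
      then show ?thesis by (rule mult_nonneg_nonneg[OF _ sp])
    qed
    ultimately show "((1-t)*0 + t*a)*((1-t)*0 + t*e) - ((1-t)*(-sg) + t*b)*((1-t) * sg + t*c) > 0"
      using pos0[OF t] by linarith
  qed
  have id: "Gc F1 F2 Y1 Y2 (of_real 1) (of_real 0) (of_real 0) (of_real 1) w = w" using Gc_id by simp
  have eq: "connected_component_set (period_cone L) (Gc F1 F2 Y1 Y2 (of_real 0) (of_real (-sg)) (of_real sg) (of_real 0) w)
     = connected_component_set (period_cone L) w"
    by (rule connected_component_eq[OF step1[unfolded id]])
  show ?thesis using step2 unfolding eq .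
qed

end

definition Gz :: "int^12 \<Rightarrow> int^12 \<Rightarrow> int^12 \<Rightarrow> int^12 \<Rightarrow> int \<Rightarrow> int \<Rightarrow> int \<Rightarrow> int \<Rightarrow> int^12 \<Rightarrow> int^12" where
  "Gz f1 f2 y1 y2 a b c e x = x + ((a-1)*(bf x y1 div 2) + b*(bf x y2 div 2)) *s f1
     + (c*(bf x y1 div 2) + (e-1)*(bf x y2 div 2)) *s f2
     + ((e-1)*(bf x f1 div 2) - c*(bf x f2 div 2)) *s y1
     + ((a-1)*(bf x f2 div 2) - b*(bf x f1 div 2)) *s y2"

lemma of_int_half: "even m \<Longrightarrow> (of_int m :: complex) / 2 = of_int (m div 2)"
  by (auto elim!: evenE)

lemma cvec_Gz:
  assumes d: "bf d d = -2" and x: "bf x d = 0" and f: "bf f1 d = 0" "bf f2 d = 0"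
    and y: "bf y1 d = 0" "bf y2 d = 0"
  shows "cvec (Gz f1 f2 y1 y2 a b c e x) =
    Gc (cvec f1) (cvec f2) (cvec y1) (cvec y2) (of_int a) (of_int b) (of_int c) (of_int e) (cvec x)"
proof -
  have h: "(of_int (bf x y1) :: complex) / 2 = of_int (bf x y1 div 2)"
     "(of_int (bf x y2) :: complex) / 2 = of_int (bf x y2 div 2)"
     "(of_int (bf x f1) :: complex) / 2 = of_int (bf x f1 div 2)"
     "(of_int (bf x f2) :: complex) / 2 = of_int (bf x f2 div 2)"
    using dperp_even[OF d x] f y by (simp_all add: of_int_half)
  show ?thesis
    unfolding Gz_def Gc_def Let_def Vc_def bfC_cvec h
    by (simp add: cvec_def vec_eq_iff algebra_simps)
qed

lemma phi_lin:
  fixes F :: "(int^12) set" and \<phi> :: "int^12 \<Rightarrow> int^12" and f1 f2 :: "int^12"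
  assumes Fd: "F = {a *s f1 + c *s f2 |a c. True}"
    and add: "\<forall>x\<in>F. \<forall>y\<in>F. \<phi> (x + y) = \<phi> x + \<phi> y"
  shows "\<phi> (s *s f1 + t *s f2) = s *s \<phi> f1 + t *s \<phi> f2"
proof -
  have mem: "v \<in> F \<longleftrightarrow> (\<exists>a c. v = a *s f1 + c *s f2)" for v using Fd by auto
  have cadd: "x + y \<in> F" if xF: "x \<in> F" and yF: "y \<in> F" for x y
  proof -
    obtain a c where "x = a *s f1 + c *s f2" using xF mem by blast
    moreover obtain a' c' where "y = a' *s f1 + c' *s f2" using yF mem by blast
    ultimately have "x + y = (a + a') *s f1 + (c + c') *s f2" by (simp add: vec_eq_iff algebra_simps)
    then show ?thesis using mem by blast
  qed
  have csm: "k *s x \<in> F" if xF: "x \<in> F" for x k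
  proof -
    obtain a c where "x = a *s f1 + c *s f2" using xF mem by blast
    then have "k *s x = (k * a) *s f1 + (k * c) *s f2" by (simp add: vec_eq_iff algebra_simps)
    then show ?thesis using mem by blast
  qed
  have f1: "f1 \<in> F" using mem[of f1] by (intro iffD2[OF mem] exI[of _ 1] exI[of _ 0]) (simp add: vec_eq_iff)
  have f2: "f2 \<in> F" by (intro iffD2[OF mem] exI[of _ 0] exI[of _ 1]) (simp add: vec_eq_iff)
  have z: "0 \<in> F" using csm[OF f1, of 0] by simp
  have p0: "\<phi> 0 = 0" using add z by (metis add_0 add_cancel_right_right)
  have pn: "\<phi> (int n *s v) = int n *s \<phi> v" if v: "v \<in> F" for n v
  proof (induction n)
    case 0 then show ?case using p0 by simp
  next
    case (Suc n)
    have "int (Suc n) *s v = int n *s v + v" by (simp add: vec_eq_iff algebra_simps)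
    then have "\<phi> (int (Suc n) *s v) = \<phi> (int n *s v) + \<phi> v" using add csm[OF v] v by simp
    then show ?case using Suc by (simp add: vec_eq_iff algebra_simps)
  qed
  have pneg: "\<phi> (- v) = - \<phi> v" if v: "v \<in> F" for v
  proof -
    have "(-1) *s v = - v" by (simp add: vec_eq_iff)
    then have "-v \<in> F" using csm[OF v, of "-1"] by simp
    then have "\<phi> (v + - v) = \<phi> v + \<phi> (- v)" using add v by blast
    then show ?thesis using p0 by (simp add: eq_neg_iff_add_eq_0 add.commute)
  qed
  have pk: "\<phi> (k *s v) = k *s \<phi> v" if v: "v \<in> F" for k v
  proof (cases "k \<ge> 0")
    case True then show ?thesis using pn[OF v, of "nat k"] by simp
  next
    case False
    have kk: "int (nat (-k)) = -k" using False by simp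
    have a1: "k *s v = - ((-k) *s v)" by (simp add: vec_eq_iff)
    have a2: "(-k) *s v \<in> F" by (rule csm[OF v])
    have a3: "\<phi> ((-k) *s v) = (-k) *s \<phi> v" using pn[OF v, of "nat (-k)"] unfolding kk .
    have "\<phi> (k *s v) = - ((-k) *s \<phi> v)" unfolding a1 pneg[OF a2] a3 ..
    then show ?thesis by (simp add: vec_eq_iff)
  qed
  show ?thesis using add csm[OF f1] csm[OF f2] pk[OF f1] pk[OF f2] by simp
qed

theorem lemmaA2:
  fixes d :: "int^12" and F :: "(int^12) set" and \<phi> :: "int^12 \<Rightarrow> int^12"
  assumes "bf d d = -2"
    and "F \<subseteq> dperp d"
    and "rank2_sublattice F"
    and "primitive_in (dperp d) F"
    and "totally_isotropic F"
    and "\<phi> \<in> SL_lat F"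
  shows "\<exists>g \<in> orth_plus (dperp d). g ` F = F \<and> (\<forall>x\<in>F. g x = \<phi> x)"
proof -
  note d = assms(1)
  have phibij: "bij_betw \<phi> F F" and phiadd: "\<forall>x\<in>F. \<forall>y\<in>F. \<phi> (x + y) = \<phi> x + \<phi> y"
    using assms(6) by (auto simp: SL_lat_def)
  obtain f1 f2 a b c e where lb: "lattice_basis F f1 f2" and pf1: "\<phi> f1 = a *s f1 + c *s f2"
    and pf2: "\<phi> f2 = b *s f1 + e *s f2" and det: "a * e - b * c = 1"
    using assms(6) unfolding SL_lat_def by blast
  have Fd: "F = {a *s f1 + c *s f2 |a c. True}" and indep: "\<forall>a c. a *s f1 + c *s f2 = 0 \<longrightarrow> a = 0 \<and> c = 0"
    using lb unfolding lattice_basis_def by auto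
  have mem: "v \<in> F \<longleftrightarrow> (\<exists>a c. v = a *s f1 + c *s f2)" for v using Fd by auto
  have f1F: "f1 \<in> F" by (intro iffD2[OF mem] exI[of _ 1] exI[of _ 0]) (simp add: vec_eq_iff)
  have f2F: "f2 \<in> F" by (intro iffD2[OF mem] exI[of _ 0] exI[of _ 1]) (simp add: vec_eq_iff)
  have f1d: "bf f1 d = 0" and f2d: "bf f2 d = 0" using assms(2) f1F f2F by (auto simp: dperp_def)
  have iso11: "bf f1 f1 = 0" and iso12: "bf f1 f2 = 0" and iso22: "bf f2 f2 = 0"
    using assms(5) f1F f2F unfolding totally_isotropic_def by auto
  have prim: "\<forall>x. bf x d = 0 \<longrightarrow> (\<forall>n::int. n \<noteq> 0 \<longrightarrow> (\<exists>a c. n *s x = a *s f1 + c *s f2)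
                  \<longrightarrow> (\<exists>a c. x = a *s f1 + c *s f2))"
    using assms(4) unfolding primitive_in_def dperp_def mem[symmetric] by auto
  obtain y1 y2 where y: "bf y1 d = 0" "bf y2 d = 0" "bf y1 f1 = 2" "bf y1 f2 = 0" "bf y2 f1 = 0"
     "bf y2 f2 = 2" "bf y1 y1 = 0" "bf y2 y2 = 0" "bf y1 y2 = 0"
    using exists_y[OF d f1d f2d iso11 iso12 iso22 indep prim] by blast
  define F1 where "F1 = cvec f1"
  define F2 where "F2 = cvec f2"
  define Y1 where "Y1 = cvec y1"
  define Y2 where "Y2 = cvec y2"
  note bs = bf_sym[of f1 f2] bf_sym[of f1 y1] bf_sym[of f1 y2] bf_sym[of f2 y1] bf_sym[of f2 y2] bf_sym[of y1 y2]
  have FF: "bfC F1 F1 = 0" "bfC F1 F2 = 0" "bfC F2 F1 = 0" "bfC F2 F2 = 0"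
    and YF: "bfC Y1 F1 = 2" "bfC Y1 F2 = 0" "bfC Y2 F1 = 0" "bfC Y2 F2 = 2"
    and FY: "bfC F1 Y1 = 2" "bfC F2 Y1 = 0" "bfC F1 Y2 = 0" "bfC F2 Y2 = 2"
    and YY: "bfC Y1 Y1 = 0" "bfC Y1 Y2 = 0" "bfC Y2 Y1 = 0" "bfC Y2 Y2 = 0"
    unfolding F1_def F2_def Y1_def Y2_def bfC_cvec using iso11 iso12 iso22 y bs by simp_all
  note GcI = Gc_iso[OF FF YF FY YY] and GcInv = Gc_inv[OF FF YF FY YY]
    and GcComp = Gc_component[OF FF YF FY YY]
  have r: "cconj F1 = F1" "cconj F2 = F2" "cconj Y1 = Y1" "cconj Y2 = Y2"
    unfolding F1_def F2_def Y1_def Y2_def by (simp_all add: cconj_cvec)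
  have cL: "cvec x \<in> complexification (dperp d)" if "bf x d = 0" for x
    unfolding complexification_def using that by (intro vec.span_base) (auto simp: dperp_def)
  have m: "F1 \<in> complexification (dperp d)" "F2 \<in> complexification (dperp d)"
     "Y1 \<in> complexification (dperp d)" "Y2 \<in> complexification (dperp d)"
    unfolding F1_def F2_def Y1_def Y2_def using cL f1d f2d y by auto
  define g where "g = Gz f1 f2 y1 y2 a b c e"
  define h where "h = Gz f1 f2 y1 y2 e (-b) (-c) a"
  define gC where "gC = Gc F1 F2 Y1 Y2 (of_int a) (of_int b) (of_int c) (of_int e)"
  define hC where "hC = Gc F1 F2 Y1 Y2 (of_int e) (- of_int b) (- of_int c) (of_int a)"
  have detC: "of_int a * of_int e - of_int b * of_int c = (1::complex)"
    using det by (metis of_int_1 of_int_diff of_int_mult)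
  have detC': "of_int e * of_int a - (- of_int b) * (- of_int c) = (1::complex)"
    using detC by (simp add: algebra_simps)
  have Gzd: "bf (Gz f1 f2 y1 y2 a' b' c' e' x) d = 0" if "bf x d = 0" for a' b' c' e' x
    using that f1d f2d y by (simp add: Gz_def bf_lin)
  have gd: "bf (g x) d = 0" if "bf x d = 0" for x using Gzd[OF that] by (simp add: g_def)
  have hd: "bf (h x) d = 0" if "bf x d = 0" for x using Gzd[OF that] by (simp add: h_def)
  have cg: "cvec (g x) = gC (cvec x)" if "bf x d = 0" for x
    unfolding g_def gC_def F1_def F2_def Y1_def Y2_def using cvec_Gz[OF d that f1d f2d y(1,2)] .
  have ch: "cvec (h x) = hC (cvec x)" if "bf x d = 0" for x
    unfolding h_def hC_def F1_def F2_def Y1_def Y2_def using cvec_Gz[OF d that f1d f2d y(1,2)] by simp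
  have hg: "h (g x) = x" if "bf x d = 0" for x
  proof -
    have "cvec (h (g x)) = hC (gC (cvec x))" using ch[OF gd[OF that]] cg[OF that] by simp
    also have "\<dots> = cvec x" unfolding hC_def gC_def by (rule GcInv[OF detC])
    finally show ?thesis by (rule cvec_inj)
  qed
  have gh: "g (h x) = x" if "bf x d = 0" for x
  proof -
    have "cvec (g (h x)) = gC (hC (cvec x))" using cg[OF hd[OF that]] ch[OF that] by simp
    also have "\<dots> = cvec x" unfolding hC_def gC_def using GcInv[OF detC', of "cvec x"] by simp
    finally show ?thesis by (rule cvec_inj)
  qed
  have bij: "bij_betw g (dperp d) (dperp d)"
    by (rule bij_betw_byWitness[where f'=h]) (auto simp: dperp_def hg gh gd hd)
  have gadd: "g (x + y) = g x + g y" if "bf x d = 0" "bf y d = 0" for x y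
  proof -
    have xy: "bf (x + y) d = 0" using that by (simp add: bf_lin)
    have "cvec (g (x + y)) = cvec (g x + g y)"
      unfolding cg[OF xy] cvec_add cg[OF that(1)] cg[OF that(2)] gC_def by (rule Gc_add)
    then show ?thesis by (rule cvec_inj)
  qed
  have giso: "bf (g x) (g y) = bf x y" if "bf x d = 0" "bf y d = 0" for x y
  proof -
    have "(of_int (bf (g x) (g y)) :: complex) = bfC (cvec (g x)) (cvec (g y))" by (simp add: bfC_cvec)
    also have "\<dots> = bfC (cvec x) (cvec y)" unfolding cg[OF that(1)] cg[OF that(2)] gC_def by (rule GcI[OF detC])
    also have "\<dots> = of_int (bf x y)" by (simp add: bfC_cvec)
    finally show ?thesis by simp
  qed
  have orth: "g \<in> orth (dperp d)"
    unfolding orth_def using bij gadd giso by (auto simp: dperp_def)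
  have "\<exists>gC :: complex^12 \<Rightarrow> complex^12.
      (\<forall>x\<in>dperp d. gC (cvec x) = cvec (g x))
    \<and> (\<forall>z\<in>complexification (dperp d). \<forall>w\<in>complexification (dperp d). gC (z + w) = gC z + gC w)
    \<and> (\<forall>z\<in>complexification (dperp d). \<forall>c. gC (c *s z) = c *s gC z)
    \<and> (\<forall>w\<in>period_cone (dperp d). gC w \<in> connected_component_set (period_cone (dperp d)) w)"
  proof (intro conjI exI[of _ gC] ballI allI)
    show "gC (cvec x) = cvec (g x)" if "x \<in> dperp d" for x using cg that by (simp add: dperp_def)
    show "gC (z + w) = gC z + gC w" for z w unfolding gC_def by (rule Gc_add)
    show "gC (k *s z) = k *s gC z" for k z unfolding gC_def by (rule Gc_smult)
    show "gC w \<in> connected_component_set (period_cone (dperp d)) w" if "w \<in> period_cone (dperp d)" for w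
    proof -
      have "real_of_int a * real_of_int e - real_of_int b * real_of_int c = 1"
        using det by (metis of_int_1 of_int_diff of_int_mult)
      from GcComp[OF r m that this] show ?thesis unfolding gC_def by simp
    qed
  qed
  then have gplus: "g \<in> orth_plus (dperp d)" using orth unfolding orth_plus_def by blast
  have gF: "g x = \<phi> x" if xF: "x \<in> F" for x
  proof -
    obtain sx tx where x: "x = sx *s f1 + tx *s f2" using xF mem by blast
    have v: "bf x y1 = 2 * sx" "bf x y2 = 2 * tx" "bf x f1 = 0" "bf x f2 = 0"
      using y iso11 iso12 iso22 bs unfolding x by (simp_all add: bf_lin)
    have "g x = x + ((a-1) * sx + b * tx) *s f1 + (c * sx + (e-1) * tx) *s f2"
      unfolding g_def Gz_def v by simp
    also have "\<dots> = sx *s \<phi> f1 + tx *s \<phi> f2"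
      unfolding pf1 pf2 x by (simp add: vec_eq_iff algebra_simps)
    also have "\<dots> = \<phi> x" unfolding x by (rule phi_lin[OF Fd phiadd, symmetric])
    finally show ?thesis .
  qed
  have "g ` F = \<phi> ` F" using gF by (rule image_cong[OF refl])
  also have "\<dots> = F" using phibij by (simp add: bij_betw_def)
  finally show ?thesis using gplus gF by blast
qed

end
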